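(* Let $n,r\in\mathbb{Z}_{\geq1}$ and $m\in\mathbb{Z}_{\geq0}$. Then \[ \mathrm{M}_m(\omega_{n,r})=\sum_{j\geq0}j^m\omega_{n,r}(j)=\sum_{i=0}^{\min(m,r)}\left\{m\atop i\right\}n^{-i}. \] In particular, if $m\leq r$, then $\mathrm{M}_m(\omega_{n,r})=\mathrm{M}_m(\rho_{1/n})$, where $\rho_{1/n}$ is the Poisson distribution with mean $1/n$.
   Context: $C_n\wr S_r=C_n^r\rtimes S_r$ (with $S_r$ permuting coordinates) acts on $B(n,r)=C_n\times\{1,\dots,r\}$ by $((\zeta_1,\dots,\zeta_r),\pi)\cdot(\zeta,i)=(\zeta_i\zeta,\pi(i))$. For $\sigma\in C_n\wr S_r$, $\mathrm{Fix}(\sigma)$ is its set of fixed points in $B(n,r)$ (its size is divisible by $n$). The distribution $\omega_{n,r}:\mathbb{Z}_{\geq0}\to\mathbb{R}_{\geq0}$ is $\omega_{n,r}(j)=|\{\sigma\in C_n\wr S_r: |\mathrm{Fix}(\sigma)|=jn\}|/|C_n\wr S_r|$. For a distribution $\omega$ on $\mathbb{Z}_{\geq0}$, $\mathrm{M}_m(\omega)=\sum_{j\ge0}j^m\omega(j)$. $\rho_\lambda(j)=e^{-\lambda}\lambda^j/j!$. $\left\{m\atop i\right\}$ is the Stirling number of the second kind, with $\left\{m\atop 0\right\}=1$ if $m=0$ and $0$ otherwise. *)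

theory Defs
  imports "HOL-Analysis.Analysis" "HOL-Combinatorics.Stirling" "HOL-Combinatorics.Permutations"
begin

text \<open>The cyclic group C_n is modelled additively as the residues {0..<n} (addition mod n).\<close>

definition wreath :: "nat \<Rightarrow> nat \<Rightarrow> ((nat \<Rightarrow> nat) \<times> (nat \<Rightarrow> nat)) set" where
  "wreath n r = {(z, p). z \<in> {..<r} \<rightarrow>\<^sub>E {..<n} \<and> p permutes {..<r}}"

definition Bset :: "nat \<Rightarrow> nat \<Rightarrow> (nat \<times> nat) set" where
  "Bset n r = {..<n} \<times> {..<r}"

definition wact :: "nat \<Rightarrow> ((nat \<Rightarrow> nat) \<times> (nat \<Rightarrow> nat)) \<Rightarrow> nat \<times> nat \<Rightarrow> nat \<times> nat" where
  "wact n \<sigma> x = ((fst \<sigma> (snd x) + fst x) mod n, snd \<sigma> (snd x))"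

definition Fix :: "nat \<Rightarrow> nat \<Rightarrow> ((nat \<Rightarrow> nat) \<times> (nat \<Rightarrow> nat)) \<Rightarrow> (nat \<times> nat) set" where
  "Fix n r \<sigma> = {x \<in> Bset n r. wact n \<sigma> x = x}"

definition omega :: "nat \<Rightarrow> nat \<Rightarrow> nat \<Rightarrow> real" where
  "omega n r j = real (card {\<sigma> \<in> wreath n r. card (Fix n r \<sigma>) = j * n}) / real (card (wreath n r))"

definition moment :: "nat \<Rightarrow> (nat \<Rightarrow> real) \<Rightarrow> real" where
  "moment m w = (\<Sum>j. real j ^ m * w j)"

definition poisson :: "real \<Rightarrow> nat \<Rightarrow> real" where
  "poisson l j = exp (- l) * l ^ j / fact j"

end

theory Submission
  imports Defs
begin


fun ff :: "nat \<Rightarrow> nat \<Rightarrow> nat" where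
  "ff 0 x = 1"
| "ff (Suc i) x = ff i x * (x - i)"

lemma ff_zero: "x < i \<Longrightarrow> ff i x = 0"
proof (induction i)
  case 0 then show ?case by simp
next
  case (Suc i)
  then show ?case by (cases "x < i") auto
qed

lemma ff_mult: "x * ff i x = ff (Suc i) x + i * ff i x"
proof (cases "i \<le> x")
  case True
  then have "ff i x * (x - i) + i * ff i x = ff i x * x"
    by (metis add_mult_distrib2 le_add_diff_inverse2 mult.commute)
  then show ?thesis by (simp add: mult.commute)
next
  case False
  then show ?thesis by (simp add: ff_zero)
qed

lemma pow_stirling: "x ^ m = (\<Sum>i\<le>m. Stirling m i * ff i x)"
proof (induction m)
  case 0 then show ?case by simp
next
  case (Suc m)
  have "x ^ Suc m = x * (\<Sum>i\<le>m. Stirling m i * ff i x)" using Suc by simp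
  also have "\<dots> = (\<Sum>i\<le>m. Stirling m i * (x * ff i x))"
    by (simp add: sum_distrib_left mult.left_commute del: ff.simps)
  also have "\<dots> = (\<Sum>i\<le>m. Stirling m i * ff (Suc i) x + i * Stirling m i * ff i x)"
  proof (rule sum.cong)
    fix i
    have "Stirling m i * (x * ff i x) = Stirling m i * (ff (Suc i) x + i * ff i x)"
      by (simp only: ff_mult)
    then show "Stirling m i * (x * ff i x) = Stirling m i * ff (Suc i) x + i * Stirling m i * ff i x"
      by (simp add: distrib_left mult.left_commute del: ff.simps)
  qed simp
  also have "\<dots> = (\<Sum>i\<le>m. Stirling m i * ff (Suc i) x) + (\<Sum>i\<le>m. i * Stirling m i * ff i x)"
    by (simp only: sum.distrib)
  also have "(\<Sum>i\<le>m. i * Stirling m i * ff i x) = (\<Sum>i\<le>Suc m. i * Stirling m i * ff i x)"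
    by (simp del: ff.simps)
  also have "\<dots> = (\<Sum>i\<le>m. Suc i * Stirling m (Suc i) * ff (Suc i) x)"
    by (subst sum.atMost_Suc_shift) (simp del: ff.simps)
  finally have L: "x ^ Suc m = (\<Sum>i\<le>m. Stirling m i * ff (Suc i) x) + (\<Sum>i\<le>m. Suc i * Stirling m (Suc i) * ff (Suc i) x)" .
  have "(\<Sum>i\<le>Suc m. Stirling (Suc m) i * ff i x) = (\<Sum>i\<le>m. Stirling (Suc m) (Suc i) * ff (Suc i) x)"
    by (subst sum.atMost_Suc_shift) (simp del: ff.simps)
  also have "\<dots> = (\<Sum>i\<le>m. Stirling m i * ff (Suc i) x) + (\<Sum>i\<le>m. Suc i * Stirling m (Suc i) * ff (Suc i) x)"
    by (simp add: sum.distrib distrib_right del: ff.simps mult_Suc)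
  finally show ?case using L by simp
qed

lemma ff_prod: "k \<le> c \<Longrightarrow> ff k c = \<Prod>{c - k + 1 .. c}"
proof (induction k)
  case 0 then show ?case by simp
next
  case (Suc k)
  have e: "{c - Suc k + 1..c} = insert (c - k) {c - k + 1..c}" using Suc.prems by auto
  have "\<Prod>{c - Suc k + 1..c} = (c - k) * \<Prod>{c - k + 1..c}"
    unfolding e by (subst prod.insert) auto
  then show ?case using Suc by (simp add: mult.commute)
qed

definition L :: "nat \<Rightarrow> 'a set \<Rightarrow> 'a list set" where
  "L i S = {xs. length xs = i \<and> distinct xs \<and> set xs \<subseteq> S}"

lemma card_L: "finite S \<Longrightarrow> card (L i S) = ff i (card S)"
proof (cases "i \<le> card S")
  case True
  assume "finite S"
  then show ?thesis using True card_lists_distinct_length_eq[of S i] ff_prod[OF True] by (simp add: L_def)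
next
  case False
  assume f: "finite S"
  have "L i S = {}"
  proof (rule ccontr)
    assume "L i S \<noteq> {}"
    then obtain xs where "length xs = i" "distinct xs" "set xs \<subseteq> S" by (auto simp: L_def)
    then have "i \<le> card S" using distinct_card card_mono[OF f] by metis
    then show False using False by simp
  qed
  then show ?thesis using False by (simp add: ff_zero)
qed

lemma finite_L: "finite S \<Longrightarrow> finite (L i S)"
  unfolding L_def by (rule finite_subset[OF _ finite_lists_length_eq[of S i]]) auto

lemma sum_card_swap:
  assumes "finite A" "finite B"
  shows "(\<Sum>a\<in>A. card {b\<in>B. P a b}) = (\<Sum>b\<in>B. card {a\<in>A. P a b})"
proof -
  have "(\<Sum>a\<in>A. card {b\<in>B. P a b}) = (\<Sum>a\<in>A. \<Sum>b\<in>B. if P a b then 1 else 0)"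
    using assms by (simp add: sum.inter_filter[symmetric])
  also have "\<dots> = (\<Sum>b\<in>B. \<Sum>a\<in>A. if P a b then 1 else 0)" by (rule sum.swap)
  also have "\<dots> = (\<Sum>b\<in>B. card {a\<in>A. P a b})"
    using assms by (simp add: sum.inter_filter[symmetric])
  finally show ?thesis .
qed

lemma permutes_diff:
  assumes "A \<subseteq> S"
  shows "p permutes (S - A) \<longleftrightarrow> p permutes S \<and> (\<forall>a\<in>A. p a = a)"
proof
  assume h: "p permutes (S - A)"
  show "p permutes S \<and> (\<forall>a\<in>A. p a = a)"
    using permutes_subset[OF h, of S] permutes_not_in[OF h] by auto
next
  assume h: "p permutes S \<and> (\<forall>a\<in>A. p a = a)"
  then have b: "\<forall>y. \<exists>!x. p x = y" and o: "\<forall>x. x \<notin> S \<longrightarrow> p x = x"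
    unfolding permutes_def by auto
  have "\<forall>x. x \<notin> S - A \<longrightarrow> p x = x" using o h by auto
  then show "p permutes (S - A)" unfolding permutes_def using b by blast
qed



definition good :: "nat \<Rightarrow> ((nat \<Rightarrow> nat) \<times> (nat \<Rightarrow> nat)) \<Rightarrow> nat set" where
  "good r \<sigma> = {i\<in>{..<r}. snd \<sigma> i = i \<and> fst \<sigma> i = 0}"

lemma wreath_eq: "wreath n r = ({..<r} \<rightarrow>\<^sub>E {..<n}) \<times> {p. p permutes {..<r}}"
  unfolding wreath_def by auto

lemma finite_wreath: "finite (wreath n r)"
  unfolding wreath_eq by (simp add: finite_PiE finite_permutations)

lemma card_wreath: "card (wreath n r) = n ^ r * fact r"
  unfolding wreath_eq by (simp add: card_cartesian_product card_PiE card_permutations)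

lemma mod_self_add:
  fixes a c n :: nat
  assumes "a < n" "(a + c) mod n = c"
  shows "a = 0"
proof -
  have "((a + c) div n) * n + c = a + c" using assms(2) div_mult_mod_eq[of "a+c" n] by simp
  then have e: "a = ((a + c) div n) * n" by simp
  show ?thesis
  proof (cases "(a + c) div n")
    case 0 then show ?thesis using e by simp
  next
    case (Suc k) then show ?thesis using e assms(1) by simp
  qed
qed

lemma Fix_eq:
  assumes "\<sigma> \<in> wreath n r"
  shows "Fix n r \<sigma> = {..<n} \<times> good r \<sigma>"
proof (rule set_eqI)
  fix x :: "nat \<times> nat"
  obtain z p where s: "\<sigma> = (z, p)" by force
  obtain c i where x: "x = (c, i)" by force
  have z: "\<And>i. i < r \<Longrightarrow> z i < n" using assms s unfolding wreath_def by auto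
  have "x \<in> Fix n r \<sigma> \<longleftrightarrow> c < n \<and> i < r \<and> (z i + c) mod n = c \<and> p i = i"
    unfolding Fix_def Bset_def wact_def s x by simp
  also have "\<dots> \<longleftrightarrow> c < n \<and> i < r \<and> z i = 0 \<and> p i = i"
    using z mod_self_add[of "z i" n c] by auto
  also have "\<dots> \<longleftrightarrow> x \<in> {..<n} \<times> good r \<sigma>"
    unfolding good_def s x by auto
  finally show "x \<in> Fix n r \<sigma> \<longleftrightarrow> x \<in> {..<n} \<times> good r \<sigma>" .
qed

lemma card_Fix:
  assumes "\<sigma> \<in> wreath n r"
  shows "card (Fix n r \<sigma>) = n * card (good r \<sigma>)"
  using Fix_eq[OF assms] by (simp add: card_cartesian_product)

lemma good_sub: "good r \<sigma> \<subseteq> {..<r}" unfolding good_def by auto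

lemma card_good_le: "card (good r \<sigma>) \<le> r"
  using card_mono[OF _ good_sub] by fastforce


lemma card_fixing:
  assumes "A \<subseteq> {..<r}" "n \<ge> 1"
  shows "card {\<sigma>\<in>wreath n r. A \<subseteq> good r \<sigma>} = fact (r - card A) * n ^ (r - card A)"
proof -
  have eq: "{\<sigma>\<in>wreath n r. A \<subseteq> good r \<sigma>} =
     (PiE {..<r} (\<lambda>j. if j \<in> A then {0} else {..<n})) \<times> {p. p permutes ({..<r} - A)}"
  proof (rule set_eqI)
    fix \<sigma> :: "(nat \<Rightarrow> nat) \<times> (nat \<Rightarrow> nat)"
    obtain z p where s: "\<sigma> = (z, p)" by force
    have "z \<in> PiE {..<r} (\<lambda>j. if j \<in> A then {0} else {..<n}) \<longleftrightarrow>
          z \<in> ({..<r} \<rightarrow>\<^sub>E {..<n}) \<and> (\<forall>a\<in>A. z a = 0)"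
      using assms by (auto simp: PiE_def Pi_def split: if_splits)
    moreover have "p permutes ({..<r} - A) \<longleftrightarrow> p permutes {..<r} \<and> (\<forall>a\<in>A. p a = a)"
      by (rule permutes_diff[OF assms(1)])
    ultimately show "\<sigma> \<in> {\<sigma>\<in>wreath n r. A \<subseteq> good r \<sigma>} \<longleftrightarrow>
       \<sigma> \<in> (PiE {..<r} (\<lambda>j. if j \<in> A then {0} else {..<n})) \<times> {p. p permutes ({..<r} - A)}"
      using assms(1) unfolding s wreath_def good_def by auto
  qed
  have fA: "finite A" using assms(1) finite_subset by blast
  have cd: "card ({..<r} - A) = r - card A" using assms(1) fA by (simp add: card_Diff_subset)
  have "(\<Prod>j<r. card (if j \<in> A then {0::nat} else {..<n})) = (\<Prod>j<r. if j \<in> A then 1 else n)"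
    by (rule prod.cong) auto
  also have "\<dots> = n ^ (r - card A)"
    using prod.If_cases[of "{..<r}" "\<lambda>j. j \<in> A" "\<lambda>_. 1::nat" "\<lambda>_. n"] cd
    by (simp add: Diff_eq)
  finally have p1: "(\<Prod>j<r. card (if j \<in> A then {0::nat} else {..<n})) = n ^ (r - card A)" .
  show ?thesis unfolding eq
    by (simp add: card_cartesian_product card_PiE card_permutations p1 cd)
qed

lemma sum_ff:
  assumes "n \<ge> 1"
  shows "(\<Sum>\<sigma>\<in>wreath n r. ff i (card (good r \<sigma>))) = ff i r * (fact (r - i) * n ^ (r - i))"
proof -
  have fL: "finite (L i {..<r})" by (rule finite_L) simp
  have "(\<Sum>\<sigma>\<in>wreath n r. ff i (card (good r \<sigma>))) = (\<Sum>\<sigma>\<in>wreath n r. card {xs\<in>L i {..<r}. set xs \<subseteq> good r \<sigma>})"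
  proof (rule sum.cong)
    fix \<sigma> assume "\<sigma> \<in> wreath n r"
    have e: "L i (good r \<sigma>) = {xs\<in>L i {..<r}. set xs \<subseteq> good r \<sigma>}"
      using good_sub[of r \<sigma>] unfolding L_def by auto
    have f: "finite (good r \<sigma>)" using good_sub[of r \<sigma>] finite_subset by blast
    have "ff i (card (good r \<sigma>)) = card (L i (good r \<sigma>))" by (rule card_L[OF f, symmetric])
    then show "ff i (card (good r \<sigma>)) = card {xs\<in>L i {..<r}. set xs \<subseteq> good r \<sigma>}"
      unfolding e .
  qed (rule refl)
  also have "\<dots> = (\<Sum>xs\<in>L i {..<r}. card {\<sigma>\<in>wreath n r. set xs \<subseteq> good r \<sigma>})"
    by (rule sum_card_swap[OF finite_wreath fL, where P = "\<lambda>\<sigma> xs. set xs \<subseteq> good r \<sigma>"])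
  also have "\<dots> = (\<Sum>xs\<in>L i {..<r}. fact (r - i) * n ^ (r - i))"
  proof (rule sum.cong)
    fix xs assume xs: "xs \<in> L i {..<r}"
    have sub: "set xs \<subseteq> {..<r}" using xs unfolding L_def by blast
    have ci: "card (set xs) = i" using xs unfolding L_def by (simp add: distinct_card)
    have "card {\<sigma>\<in>wreath n r. set xs \<subseteq> good r \<sigma>} = fact (r - card (set xs)) * n ^ (r - card (set xs))"
      by (rule card_fixing[OF sub assms])
    then show "card {\<sigma>\<in>wreath n r. set xs \<subseteq> good r \<sigma>} = fact (r - i) * n ^ (r - i)"
      unfolding ci .
  qed (rule refl)
  also have "\<dots> = card (L i {..<r}) * (fact (r - i) * n ^ (r - i))" by simp
  also have "card (L i {..<r}) = ff i r" using card_L[of "{..<r}" i] by simp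
  finally show ?thesis .
qed

lemma ff_fact: "i \<le> r \<Longrightarrow> ff i r * fact (r - i) = (fact r :: nat)"
proof (induction i)
  case 0 then show ?case by simp
next
  case (Suc i)
  have e: "r - i = Suc (r - Suc i)" using Suc.prems by simp
  have "ff (Suc i) r * fact (r - Suc i) = ff i r * ((r - i) * fact (r - Suc i))" by simp
  also have "(r - i) * fact (r - Suc i) = (fact (r - i) :: nat)" unfolding e by simp
  finally show ?case using Suc by simp
qed

lemma omega_eq:
  assumes "n \<ge> 1"
  shows "omega n r j = real (card {\<sigma>\<in>wreath n r. card (good r \<sigma>) = j}) / real (card (wreath n r))"
proof -
  have "{\<sigma>\<in>wreath n r. card (Fix n r \<sigma>) = j * n} = {\<sigma>\<in>wreath n r. card (good r \<sigma>) = j}"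
    using card_Fix assms by (auto simp: mult.commute)
  then show ?thesis unfolding omega_def by simp
qed

lemma sum_pow_good:
  "(\<Sum>j\<le>r. real j ^ m * real (card {\<sigma>\<in>wreath n r. card (good r \<sigma>) = j}))
    = (\<Sum>\<sigma>\<in>wreath n r. real (card (good r \<sigma>)) ^ m)"
proof -
  have "(\<Sum>j\<le>r. real j ^ m * real (card {\<sigma>\<in>wreath n r. card (good r \<sigma>) = j}))
     = (\<Sum>j\<le>r. \<Sum>\<sigma>\<in>wreath n r. if card (good r \<sigma>) = j then real j ^ m else 0)"
  proof (rule sum.cong)
    fix j
    have "real (card {\<sigma>\<in>wreath n r. card (good r \<sigma>) = j}) =
       (\<Sum>\<sigma>\<in>wreath n r. if card (good r \<sigma>) = j then 1 else 0)"
      using finite_wreath by (simp add: sum.inter_filter[symmetric])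
    then show "real j ^ m * real (card {\<sigma>\<in>wreath n r. card (good r \<sigma>) = j})
       = (\<Sum>\<sigma>\<in>wreath n r. if card (good r \<sigma>) = j then real j ^ m else 0)"
      by (simp add: sum_distrib_left if_distrib cong: if_cong)
  qed simp
  also have "\<dots> = (\<Sum>\<sigma>\<in>wreath n r. \<Sum>j\<le>r. if card (good r \<sigma>) = j then real j ^ m else 0)"
    by (rule sum.swap)
  also have "\<dots> = (\<Sum>\<sigma>\<in>wreath n r. real (card (good r \<sigma>)) ^ m)"
  proof (rule sum.cong)
    fix \<sigma>
    have "card (good r \<sigma>) \<in> {..r}" using card_good_le by simp
    then show "(\<Sum>j\<le>r. if card (good r \<sigma>) = j then real j ^ m else 0) = real (card (good r \<sigma>)) ^ m"
      by (simp add: sum.delta)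
  qed simp
  finally show ?thesis .
qed

lemma moment_omega:
  assumes "n \<ge> 1"
  shows "moment m (omega n r) = (\<Sum>i=0..min m r. real (Stirling m i) / real n ^ i)"
proof -
  let ?W = "wreath n r"
  let ?k = "\<lambda>\<sigma>. card (good r \<sigma>)"
  have W0: "real (card ?W) = real n ^ r * fact r" by (simp add: card_wreath)
  have Wpos: "real (card ?W) > 0" unfolding W0 using assms by simp
  have "moment m (omega n r) = (\<Sum>j\<le>r. real j ^ m * omega n r j)"
    unfolding moment_def
  proof (rule suminf_finite)
    fix j assume "j \<notin> {..r}"
    then have e: "{\<sigma>\<in>?W. ?k \<sigma> = j} = {}" using card_good_le[of r] by auto
    show "real j ^ m * omega n r j = 0" unfolding omega_eq[OF assms] e by simp
  qed simp
  also have "\<dots> = (\<Sum>j\<le>r. real j ^ m * real (card {\<sigma>\<in>?W. ?k \<sigma> = j})) / real (card ?W)"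
    by (simp add: omega_eq[OF assms] sum_divide_distrib)
  also have "(\<Sum>j\<le>r. real j ^ m * real (card {\<sigma>\<in>?W. ?k \<sigma> = j})) = (\<Sum>\<sigma>\<in>?W. real (?k \<sigma>) ^ m)"
    by (rule sum_pow_good)
  also have "\<dots> = real (\<Sum>\<sigma>\<in>?W. ?k \<sigma> ^ m)" by simp
  also have "(\<Sum>\<sigma>\<in>?W. ?k \<sigma> ^ m) = (\<Sum>\<sigma>\<in>?W. \<Sum>i\<le>m. Stirling m i * ff i (?k \<sigma>))"
    using pow_stirling by simp
  also have "\<dots> = (\<Sum>i\<le>m. Stirling m i * (\<Sum>\<sigma>\<in>?W. ff i (?k \<sigma>)))"
    by (subst sum.swap) (simp add: sum_distrib_left)
  also have "\<dots> = (\<Sum>i\<le>m. Stirling m i * (ff i r * (fact (r - i) * n ^ (r - i))))"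
    using sum_ff[OF assms] by simp
  finally have "moment m (omega n r) =
     (\<Sum>i\<le>m. real (Stirling m i) * (real (ff i r * fact (r - i)) * real n ^ (r - i)) / real (card ?W))"
    by (simp add: sum_divide_distrib mult.assoc)
  also have "\<dots> = (\<Sum>i\<le>m. if i \<le> r then real (Stirling m i) / real n ^ i else 0)"
  proof (rule sum.cong)
    fix i
    show "real (Stirling m i) * (real (ff i r * fact (r - i)) * real n ^ (r - i)) / real (card ?W)
       = (if i \<le> r then real (Stirling m i) / real n ^ i else 0)"
    proof (cases "i \<le> r")
      case True
      have f: "real (ff i r * fact (r - i)) = fact r" using ff_fact[OF True]
        by (metis of_nat_fact)
      have p: "real n ^ r = real n ^ (r - i) * real n ^ i"
        using True by (simp add: power_add[symmetric])
      show ?thesis using True assms unfolding f W0 p by (simp add: field_simps)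
    next
      case False
      then show ?thesis by (simp add: ff_zero)
    qed
  qed simp
  also have "\<dots> = (\<Sum>i\<in>{i\<in>{..m}. i \<le> r}. real (Stirling m i) / real n ^ i)"
    using sum.inter_filter[of "{..m}" "\<lambda>i. real (Stirling m i) / real n ^ i" "\<lambda>i. i \<le> r"] by simp
  also have "{i\<in>{..m}. i \<le> r} = {0..min m r}" by auto
  finally show ?thesis .
qed

lemma ff_poisson_sums:
  fixes l :: real
  shows "(\<lambda>j. real (ff i j) * (l ^ j / fact j)) sums (l ^ i * exp l)"
proof -
  have e: "(\<lambda>t. l ^ t / fact t) sums exp l"
    using exp_converges[of l] by (simp add: divide_inverse mult.commute scaleR_conv_of_real)
  have "(\<lambda>t. l ^ i * (l ^ t / fact t)) sums (l ^ i * exp l)" by (rule sums_mult[OF e])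
  moreover have "\<And>t. real (ff i (t + i)) * (l ^ (t + i) / fact (t + i)) = l ^ i * (l ^ t / fact t)"
  proof -
    fix t
    have "ff i (t + i) * fact t = (fact (t + i) :: nat)" using ff_fact[of i "t+i"] by simp
    then have "real (ff i (t + i)) * fact t = fact (t + i)" by (metis of_nat_fact of_nat_mult)
    moreover have "(fact t :: real) > 0" "(fact (t+i) :: real) > 0" by auto
    ultimately show "real (ff i (t + i)) * (l ^ (t + i) / fact (t + i)) = l ^ i * (l ^ t / fact t)"
      by (simp add: field_simps power_add)
  qed
  ultimately have "(\<lambda>t. real (ff i (t + i)) * (l ^ (t + i) / fact (t + i))) sums (l ^ i * exp l)"
    by simp
  then show ?thesis
    by (subst (asm) sums_zero_iff_shift[where f = "\<lambda>j. real (ff i j) * (l ^ j / fact j)"]) (auto simp: ff_zero)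
qed

lemma moment_poisson:
  fixes l :: real
  shows "moment m (poisson l) = (\<Sum>i\<le>m. real (Stirling m i) * l ^ i)"
proof -
  have "(\<lambda>j. \<Sum>i\<le>m. real (Stirling m i) * exp (- l) * (real (ff i j) * (l ^ j / fact j)))
      sums (\<Sum>i\<le>m. real (Stirling m i) * exp (- l) * (l ^ i * exp l))"
    by (rule sums_sum) (intro sums_mult ff_poisson_sums)
  moreover have "\<And>j. (\<Sum>i\<le>m. real (Stirling m i) * exp (- l) * (real (ff i j) * (l ^ j / fact j)))
       = real j ^ m * poisson l j"
  proof -
    fix j
    have "real j ^ m = real (j ^ m)" by simp
    also have "\<dots> = (\<Sum>i\<le>m. real (Stirling m i) * real (ff i j))"
      by (subst pow_stirling) simp
    finally have eq: "real j ^ m = (\<Sum>i\<le>m. real (Stirling m i) * real (ff i j))" .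
    have "real j ^ m * poisson l j = (\<Sum>i\<le>m. real (Stirling m i) * real (ff i j)) * (exp (- l) * l ^ j / fact j)"
      unfolding poisson_def eq by simp
    also have "\<dots> = (\<Sum>i\<le>m. real (Stirling m i) * real (ff i j) * (exp (- l) * l ^ j / fact j))"
      by (rule sum_distrib_right)
    also have "\<dots> = (\<Sum>i\<le>m. real (Stirling m i) * exp (- l) * (real (ff i j) * (l ^ j / fact j)))"
      by (rule sum.cong) (simp_all add: field_simps)
    finally show "(\<Sum>i\<le>m. real (Stirling m i) * exp (- l) * (real (ff i j) * (l ^ j / fact j)))
       = real j ^ m * poisson l j" by simp
  qed
  moreover have "(\<Sum>i\<le>m. real (Stirling m i) * exp (- l) * (l ^ i * exp l)) = (\<Sum>i\<le>m. real (Stirling m i) * l ^ i)"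
    by (rule sum.cong) (simp_all add: exp_minus field_simps)
  ultimately show ?thesis unfolding moment_def by (simp add: sums_iff)
qed

theorem mainTheorem3:
  fixes n r m :: nat
  assumes "n \<ge> 1" and "r \<ge> 1"
  shows "moment m (omega n r) = (\<Sum>i=0..min m r. real (Stirling m i) / real n ^ i)
    \<and> (m \<le> r \<longrightarrow> moment m (omega n r) = moment m (poisson (1 / real n)))"
proof (intro conjI impI)
  show "moment m (omega n r) = (\<Sum>i=0..min m r. real (Stirling m i) / real n ^ i)"
    by (rule moment_omega[OF assms(1)])
next
  assume "m \<le> r"
  then have "min m r = m" by simp
  then show "moment m (omega n r) = moment m (poisson (1 / real n))"
    unfolding moment_omega[OF assms(1)] moment_poisson
    by (simp add: atLeast0AtMost power_one_over)
qed

end
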